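(* Let $(T,X)$ be an unbounded M-flow, where $T$ is a Hausdorff topological group and $X$ a Hausdorff uniform space (not necessarily compact). Then $(T,X)$ is sensitive to initial conditions on $X$.
   Context: $\mathscr U_X$ is a compatible symmetric uniformity of $X$, $\varepsilon[A]=\{y:\exists a\in A,(a,y)\in\varepsilon\}$. $A\subseteq T$ is syndetic if there is compact $K\subseteq T$ with $Kt\cap A\ne\emptyset$ for all $t$. A point $x$ is a.p. if $\{t:tx\in U\}$ is syndetic for every neighborhood $U$ of $x$. The flow is topologically transitive if $\{t:V\cap tU\ne\emptyset\}\ne\emptyset$ for all nonempty open $U,V$; it is an M-flow if it is topologically transitive and its a.p. points are dense. $(T,X)$ is bounded if for every $\alpha\in\mathscr U_X$ there exist $x_0\in X$ and compact $K\subseteq T$ with $\alpha[Kx_0]=X$; otherwise it is unbounded. $(T,X)$ is sensitive to initial conditions on $X$ if there is $\varepsilon\in\mathscr U_X$ such that for every $x\in X$ and every neighborhood $U$ of $x$ there exist $y\in U$ and $t\in T$ with $(tx,ty)\notin\varepsilon$. *)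

theory Defs
  imports "HOL-Analysis.Analysis"
begin

text \<open>A flow (T,X): a topological group T (written additively, not necessarily
commutative; neutral element 0) acting jointly continuously on a space X,
with (s t) x = s (t x) rendered as act (s + t) x = act s (act t x).\<close>

definition is_flow :: "('g::topological_group_add \<Rightarrow> 'x::topological_space \<Rightarrow> 'x) \<Rightarrow> bool" where
  "is_flow act \<longleftrightarrow>
     continuous_on UNIV (\<lambda>p. act (fst p) (snd p)) \<and>
     (\<forall>x. act 0 x = x) \<and>
     (\<forall>s t x. act (s + t) x = act s (act t x))"

definition entourage :: "('x::uniform_space \<times> 'x) set \<Rightarrow> bool" where
  "entourage \<epsilon> \<longleftrightarrow> eventually (\<lambda>p. p \<in> \<epsilon>) uniformity"

definition syndetic :: "'g::topological_group_add set \<Rightarrow> bool" where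
  "syndetic A \<longleftrightarrow> (\<exists>K. compact K \<and> (\<forall>t. (\<lambda>k. k + t) ` K \<inter> A \<noteq> {}))"

definition ap_point :: "('g::topological_group_add \<Rightarrow> 'x::topological_space \<Rightarrow> 'x) \<Rightarrow> 'x \<Rightarrow> bool" where
  "ap_point act x \<longleftrightarrow> (\<forall>U. open U \<longrightarrow> x \<in> U \<longrightarrow> syndetic {t. act t x \<in> U})"

definition top_transitive :: "('g::topological_group_add \<Rightarrow> 'x::topological_space \<Rightarrow> 'x) \<Rightarrow> bool" where
  "top_transitive act \<longleftrightarrow>
     (\<forall>U V. open U \<longrightarrow> U \<noteq> {} \<longrightarrow> open V \<longrightarrow> V \<noteq> {} \<longrightarrow>
        {t. V \<inter> act t ` U \<noteq> {}} \<noteq> {})"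

definition M_flow :: "('g::topological_group_add \<Rightarrow> 'x::topological_space \<Rightarrow> 'x) \<Rightarrow> bool" where
  "M_flow act \<longleftrightarrow> top_transitive act \<and> closure {x. ap_point act x} = UNIV"

definition bounded_flow :: "('g::topological_group_add \<Rightarrow> 'x::uniform_space \<Rightarrow> 'x) \<Rightarrow> bool" where
  "bounded_flow act \<longleftrightarrow>
     (\<forall>\<alpha>. entourage \<alpha> \<longrightarrow>
        (\<exists>x0 K. compact K \<and> \<alpha> `` ((\<lambda>k. act k x0) ` K) = UNIV))"

definition sensitive :: "('g::topological_group_add \<Rightarrow> 'x::uniform_space \<Rightarrow> 'x) \<Rightarrow> bool" where
  "sensitive act \<longleftrightarrow>
     (\<exists>\<epsilon>. entourage \<epsilon> \<and>
        (\<forall>x U. open U \<longrightarrow> x \<in> U \<longrightarrow> (\<exists>y\<in>U. \<exists>t. (act t x, act t y) \<notin> \<epsilon>)))"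

end

theory Submission
  imports Defs
begin

theorem theorem4:
  fixes act :: "'g::{topological_group_add, t2_space} \<Rightarrow> 'x::{uniform_space, t2_space} \<Rightarrow> 'x"
  assumes "is_flow act"
    and "M_flow act"
    and "\<not> bounded_flow act"
  shows "sensitive act"
proof -
  have fl: "\<And>s t x. act (s + t) x = act s (act t x)" using assms(1) unfolding is_flow_def by blast
  have "\<exists>\<alpha>. entourage \<alpha> \<and> (\<forall>x0 K. compact K \<longrightarrow> \<alpha> `` ((\<lambda>k. act k x0) ` K) \<noteq> UNIV)"
    using assms(3) unfolding bounded_flow_def by simp
  then obtain \<alpha> where ent: "entourage \<alpha>"
    and nb: "\<And>x0 K. compact K \<Longrightarrow> \<alpha> `` ((\<lambda>k. act k x0) ` K) \<noteq> UNIV"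
    by auto
  obtain D1 where D1: "eventually D1 uniformity" and D1t: "\<And>x y z. D1 (x,y) \<Longrightarrow> D1 (y,z) \<Longrightarrow> (x,z) \<in> \<alpha>"
    using uniformity_trans[of "\<lambda>p. p \<in> \<alpha>"] ent unfolding entourage_def by blast
  obtain D2 where D2: "eventually D2 uniformity" and D2t: "\<And>x y z. D2 (x,y) \<Longrightarrow> D2 (y,z) \<Longrightarrow> D1 (x,z)"
    using uniformity_trans[OF D1] by blast
  define \<epsilon> where "\<epsilon> = {p. D2 p \<and> D2 (snd p, fst p)}"
  have entE: "entourage \<epsilon>"
    unfolding entourage_def \<epsilon>_def
    using eventually_conj[OF D2 uniformity_sym[OF D2]]
    by (simp add: case_prod_beta)
  show ?thesis
  proof (rule ccontr)
    assume "\<not> sensitive act"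
    then have "\<exists>x U. open U \<and> x \<in> U \<and> (\<forall>y\<in>U. \<forall>t. (act t x, act t y) \<in> \<epsilon>)"
      using entE unfolding sensitive_def by auto
    then obtain x U where U: "open U" "x \<in> U" and ns0: "\<forall>y\<in>U. \<forall>t. (act t x, act t y) \<in> \<epsilon>"
      by auto
    have ns: "\<And>y t. y \<in> U \<Longrightarrow> (act t x, act t y) \<in> \<epsilon>" using ns0 by simp
    have "U \<inter> closure {x. ap_point act x} \<noteq> {}" using assms(2) U unfolding M_flow_def by auto
    then obtain z where z: "z \<in> U" "ap_point act z"
      using open_Int_closure_eq_empty[OF U(1)] by blast
    then have "syndetic {t. act t z \<in> U}" using U unfolding ap_point_def by simp
    then obtain K where K: "compact K" and Ks: "\<And>t. (\<lambda>k. k + t) ` K \<inter> {t. act t z \<in> U} \<noteq> {}"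
      unfolding syndetic_def by auto
    have cK: "compact (uminus ` K)"
      by (rule compact_continuous_image[OF _ K]) (intro continuous_intros)
    have "\<alpha> `` ((\<lambda>k. act k x) ` (uminus ` K)) = UNIV"
    proof (rule set_eqI, rule iffI, simp)
      fix w
      have "eventually (\<lambda>y. (w,y) \<in> \<epsilon>) (nhds w)"
        unfolding eventually_nhds_uniformity
        using entE unfolding entourage_def by (rule eventually_mono) auto
      then obtain V where V: "open V" "w \<in> V" "\<And>y. y \<in> V \<Longrightarrow> (w,y) \<in> \<epsilon>"
        unfolding eventually_nhds by blast
      have "top_transitive act" using assms(2) unfolding M_flow_def by simp
      then have "{t. V \<inter> act t ` U \<noteq> {}} \<noteq> {}"
        using U V unfolding top_transitive_def by auto
      then obtain t y where y: "y \<in> U" "act t y \<in> V" by blast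
      obtain k where k: "k \<in> K" "act (k + t) z \<in> U" using Ks[of t] by blast
      have eq: "act (-k) (act (k + t) z) = act t z"
        using fl[of "-k" "k+t" z] by (simp add: add.assoc[symmetric])
      have e1: "(act (-k) x, act t z) \<in> \<epsilon>" using ns[OF k(2), of "-k"] eq by simp
      have e2: "(act t x, act t z) \<in> \<epsilon>" using ns[OF z(1)] by simp
      have e3: "(act t x, act t y) \<in> \<epsilon>" using ns[OF y(1)] by simp
      have e4: "(w, act t y) \<in> \<epsilon>" using V(3) y(2) by simp
      have "D1 (act (-k) x, act t x)" using e1 e2 D2t unfolding \<epsilon>_def by auto
      moreover have "D1 (act t x, w)" using e3 e4 D2t unfolding \<epsilon>_def by auto
      ultimately have "(act (-k) x, w) \<in> \<alpha>" by (rule D1t)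
      then show "w \<in> \<alpha> `` ((\<lambda>k. act k x) ` (uminus ` K))" using k(1) by blast
    qed
    with nb[OF cK] show False by blast
  qed
qed

end
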